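(* Let $(f_n)_{n=1}^\infty$ be a sequence of meromorphic functions on $\mathbb{C}$ and let $F^n=f_n\circ\dots\circ f_1$. Suppose $\xi\in\mathbb{C}$ is a point for which there exist a sequence $\xi_k\to\xi$ with $\xi_k\neq\xi$ and a subsequence $(n_j)_{j=1}^\infty$ such that $$\lim_{j\to\infty}|(F^{n_j})'(\xi_k)|=\infty,$$ where the sequence $(F^{n_j}(\xi_k))_{j=1}^\infty$ is bounded for every $k\geq 1$. Then $\xi\in\mathcal{J}(F)$.
   Context: The non-autonomous Fatou set $\mathcal{F}(F)$ is the set of points $z\in\mathbb{C}$ having a neighborhood on which all iterates $F^n$ are defined and form a normal family; the non-autonomous Julia set is $\mathcal{J}(F)=\mathbb{C}\setminus\mathcal{F}(F)$. *)

theory Defs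
  imports "HOL-Complex_Analysis.Complex_Analysis"
begin

text \<open>A meromorphic function on the whole plane: meromorphic in the library sense, and
  analytic (with its actual values) away from its poles, so no removable singularities
  carry wrong values.\<close>
definition merom_plane :: "(complex \<Rightarrow> complex) \<Rightarrow> bool" where
  "merom_plane g \<longleftrightarrow> g meromorphic_on UNIV \<and> g analytic_on {z. \<not> is_pole g z}"

text \<open>Non-autonomous iterates: the sequence is indexed from 1 (f 0 is unused);
  iter f 0 = id and iter f (Suc n) = f (Suc n) o iter f n, i.e. F^n = f_n o ... o f_1.\<close>
fun iter :: "(nat \<Rightarrow> complex \<Rightarrow> complex) \<Rightarrow> nat \<Rightarrow> complex \<Rightarrow> complex" where
  "iter f 0 = (\<lambda>z. z)"
| "iter f (Suc n) = (\<lambda>z. f (Suc n) (iter f n z))"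

definition iter_defined :: "(nat \<Rightarrow> complex \<Rightarrow> complex) \<Rightarrow> nat \<Rightarrow> complex \<Rightarrow> bool" where
  "iter_defined f n z \<longleftrightarrow> (\<forall>m<n. \<not> is_pole (f (Suc m)) (iter f m z))"

definition normal_family :: "complex set \<Rightarrow> (nat \<Rightarrow> complex \<Rightarrow> complex) \<Rightarrow> bool" where
  "normal_family U g \<longleftrightarrow>
     (\<forall>r :: nat \<Rightarrow> nat. \<exists>s :: nat \<Rightarrow> nat. strict_mono s \<and>
        ((\<exists>h. \<forall>K. K \<subseteq> U \<and> compact K \<longrightarrow>
                 uniform_limit K (\<lambda>n. g (r (s n))) h sequentially)
         \<or> (\<forall>K. K \<subseteq> U \<and> compact K \<longrightarrow>
                 (\<forall>B. eventually (\<lambda>n. \<forall>z\<in>K. B \<le> norm (g (r (s n)) z)) sequentially))))"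

definition fatou_set :: "(nat \<Rightarrow> complex \<Rightarrow> complex) \<Rightarrow> complex set" where
  "fatou_set f = {z. \<exists>U. open U \<and> z \<in> U \<and> (\<forall>n. \<forall>w\<in>U. iter_defined f n w)
                        \<and> normal_family U (iter f)}"

definition julia_set :: "(nat \<Rightarrow> complex \<Rightarrow> complex) \<Rightarrow> complex set" where
  "julia_set f = UNIV - fatou_set f"

end

theory Submission
  imports Defs
begin

lemma iter_analytic:
  assumes mer: "\<forall>n\<ge>1. merom_plane (f n)"
    and def: "\<forall>w\<in>U. iter_defined f n w"
  shows "iter f n analytic_on U"
  using def
proof (induction n)
  case 0
  then show ?case by simp
next
  case (Suc n)
  have d: "\<forall>w\<in>U. iter_defined f n w"
    using Suc.prems unfolding iter_defined_def by auto
  have a1: "iter f n analytic_on U" using Suc.IH d by blast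
  have a2: "f (Suc n) analytic_on {z. \<not> is_pole (f (Suc n)) z}"
    using mer unfolding merom_plane_def by auto
  have "\<And>z. z \<in> U \<Longrightarrow> iter f n z \<in> {z. \<not> is_pole (f (Suc n)) z}"
    using Suc.prems unfolding iter_defined_def by auto
  then have "f (Suc n) \<circ> iter f n analytic_on U"
    using analytic_on_compose_gen[OF a1 a2] by blast
  then show ?case by (simp add: o_def)
qed

theorem lemma2p5:
  fixes f :: "nat \<Rightarrow> complex \<Rightarrow> complex" and \<xi> :: complex
    and xs :: "nat \<Rightarrow> complex" and nj :: "nat \<Rightarrow> nat"
  assumes "\<forall>n\<ge>1. merom_plane (f n)"
    and "xs \<longlonglongrightarrow> \<xi>" and "\<forall>k. xs k \<noteq> \<xi>"
    and "strict_mono nj"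
    and "\<forall>k j. iter_defined f (nj j) (xs k)"
    and "\<forall>k. bounded (range (\<lambda>j. iter f (nj j) (xs k)))"
    and "\<forall>k. filterlim (\<lambda>j. norm (deriv (iter f (nj j)) (xs k))) at_top sequentially"
  shows "\<xi> \<in> julia_set f"
proof (rule ccontr)
  assume "\<xi> \<notin> julia_set f"
  then obtain U where U: "open U" "\<xi> \<in> U" "\<forall>n. \<forall>w\<in>U. iter_defined f n w"
    and nf: "normal_family U (iter f)"
    unfolding julia_set_def fatou_set_def by auto
  have "eventually (\<lambda>k. xs k \<in> U) sequentially"
    using assms(2) U(1,2) by (simp add: tendsto_def)
  then obtain k where kU: "xs k \<in> U" by (meson eventually_sequentially order_refl)
  obtain s where s: "strict_mono s" and
    alt: "(\<exists>h. \<forall>K. K \<subseteq> U \<and> compact K \<longrightarrow>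
                 uniform_limit K (\<lambda>n. iter f (nj (s n))) h sequentially)
         \<or> (\<forall>K. K \<subseteq> U \<and> compact K \<longrightarrow>
                 (\<forall>B. eventually (\<lambda>n. \<forall>z\<in>K. B \<le> norm (iter f (nj (s n)) z)) sequentially))"
    using nf unfolding normal_family_def by blast
  show False
    using alt
  proof
    assume "\<exists>h. \<forall>K. K \<subseteq> U \<and> compact K \<longrightarrow>
                 uniform_limit K (\<lambda>n. iter f (nj (s n))) h sequentially"
    then obtain h where h: "\<And>K. K \<subseteq> U \<Longrightarrow> compact K \<Longrightarrow>
                 uniform_limit K (\<lambda>n. iter f (nj (s n))) h sequentially" by blast
    have hol: "\<And>m. iter f m holomorphic_on U"
      using iter_analytic[OF assms(1)] U(3) U(1) analytic_imp_holomorphic by blast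
    have hfd: "\<And>n x. x \<in> U \<Longrightarrow> ((\<lambda>n. iter f (nj (s n))) n has_field_derivative
                   (\<lambda>n x. deriv (iter f (nj (s n))) x) n x) (at x)"
      using hol U(1) holomorphic_derivI by blast
    have ul: "\<And>x. x \<in> U \<Longrightarrow> \<exists>d. 0 < d \<and> cball x d \<subseteq> U \<and>
              uniform_limit (cball x d) (\<lambda>n. iter f (nj (s n))) h sequentially"
    proof -
      fix x assume "x \<in> U"
      then obtain d where "d > 0" "cball x d \<subseteq> U"
        using U(1) open_contains_cball by blast
      then show "\<exists>d. 0 < d \<and> cball x d \<subseteq> U \<and>
              uniform_limit (cball x d) (\<lambda>n. iter f (nj (s n))) h sequentially"
        using h[OF _ compact_cball] by blast
    qed
    obtain g' where "\<forall>x\<in>U. (h has_field_derivative g' x) (at x) \<and>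
        ((\<lambda>n. deriv (iter f (nj (s n))) x) \<longlongrightarrow> g' x) sequentially"
      using has_complex_derivative_uniform_sequence[OF U(1) hfd ul] by blast
    then have lim: "((\<lambda>n. deriv (iter f (nj (s n))) (xs k)) \<longlongrightarrow> g' (xs k)) sequentially"
      using kU by blast
    have "filterlim (\<lambda>j. norm (deriv (iter f (nj j)) (xs k))) at_top sequentially"
      using assms(7) by blast
    then have "filterlim ((\<lambda>j. norm (deriv (iter f (nj j)) (xs k))) \<circ> s) at_top sequentially"
      unfolding o_def by (rule filterlim_compose[OF _ filterlim_subseq[OF s]])
    then have "filterlim (\<lambda>n. deriv (iter f (nj (s n))) (xs k)) at_infinity sequentially"
      by (intro filterlim_norm_at_top_imp_at_infinity) (simp add: o_def)
    then show False
      using not_tendsto_and_filterlim_at_infinity[OF _ lim] by simp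
  next
    assume divg: "\<forall>K. K \<subseteq> U \<and> compact K \<longrightarrow>
                 (\<forall>B. eventually (\<lambda>n. \<forall>z\<in>K. B \<le> norm (iter f (nj (s n)) z)) sequentially)"
    then have ev: "\<And>B. eventually (\<lambda>n. B \<le> norm (iter f (nj (s n)) (xs k))) sequentially"
    proof -
      fix B
      have "{xs k} \<subseteq> U" using kU by simp
      then have "eventually (\<lambda>n. \<forall>z\<in>{xs k}. B \<le> norm (iter f (nj (s n)) z)) sequentially"
        using divg compact_sing by blast
      then show "eventually (\<lambda>n. B \<le> norm (iter f (nj (s n)) (xs k))) sequentially"
        by simp
    qed
    obtain M where M: "\<And>j. norm (iter f (nj j) (xs k)) \<le> M"
      using assms(6) unfolding bounded_iff by blast
    obtain n where "M + 1 \<le> norm (iter f (nj (s n)) (xs k))"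
      using ev[of "M+1"] unfolding eventually_sequentially by blast
    with M[of "s n"] show False by linarith
  qed
qed

end
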